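(* Let $n\ge1$ players all have the same additive valuation $v$ on a finite set of goods $M$. Goods of value $0$ are allowed. Then there exists an allocation that is both EFX and Pareto optimal.
   Context: A valuation is a function $v:2^M\to\mathbb{R}_{\ge0}$ with $v(\emptyset)=0$ that is monotone: $v(S)\le v(T)$ whenever $S\subseteq T$. It is additive if $v(S)=\sum_{g\in S}v(\{g\})$ for all $S\subseteq M$. An allocation is an ordered partition $(A_1,\dots,A_n)$ of $M$; parts may be empty. It is EFX if for all players $i,j$ and every $g\in A_j$ we have $v_i(A_i)\ge v_i(A_j\setminus\{g\})$. It is Pareto optimal (PO) if there is no allocation $B$ with $v_i(B_i)\ge v_i(A_i)$ for all $i$ and $v_j(B_j)>v_j(A_j)$ for some $j$. *)

theory Defs
  imports Complex_Main
begin

definition is_allocation :: "nat \<Rightarrow> 'g set \<Rightarrow> (nat \<Rightarrow> 'g set) \<Rightarrow> bool" where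
  "is_allocation n M A \<longleftrightarrow>
     (\<forall>i<n. A i \<subseteq> M) \<and> (\<Union>i<n. A i) = M \<and>
     (\<forall>i<n. \<forall>j<n. i \<noteq> j \<longrightarrow> A i \<inter> A j = {})"

definition valuation :: "'g set \<Rightarrow> ('g set \<Rightarrow> real) \<Rightarrow> bool" where
  "valuation M v \<longleftrightarrow> v {} = 0 \<and> (\<forall>S. S \<subseteq> M \<longrightarrow> v S \<ge> 0) \<and>
     (\<forall>S T. S \<subseteq> T \<and> T \<subseteq> M \<longrightarrow> v S \<le> v T)"

definition additive_valuation :: "'g set \<Rightarrow> ('g set \<Rightarrow> real) \<Rightarrow> bool" where
  "additive_valuation M v \<longleftrightarrow> (\<forall>S. S \<subseteq> M \<longrightarrow> v S = (\<Sum>g\<in>S. v {g}))"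

definition EFX :: "nat \<Rightarrow> (nat \<Rightarrow> 'g set \<Rightarrow> real) \<Rightarrow> (nat \<Rightarrow> 'g set) \<Rightarrow> bool" where
  "EFX n vs A \<longleftrightarrow>
     (\<forall>i<n. \<forall>j<n. \<forall>g\<in>A j. vs i (A i) \<ge> vs i (A j - {g}))"

definition pareto_optimal ::
  "nat \<Rightarrow> 'g set \<Rightarrow> (nat \<Rightarrow> 'g set \<Rightarrow> real) \<Rightarrow> (nat \<Rightarrow> 'g set) \<Rightarrow> bool" where
  "pareto_optimal n M vs A \<longleftrightarrow>
     \<not> (\<exists>B. is_allocation n M B \<and> (\<forall>i<n. vs i (B i) \<ge> vs i (A i)) \<and>
            (\<exists>j<n. vs j (B j) > vs j (A j)))"

end

theory Submission
  imports Defs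
begin

definition efxw :: "nat \<Rightarrow> ('g \<Rightarrow> real) \<Rightarrow> 'g set \<Rightarrow> (nat \<Rightarrow> 'g set) \<Rightarrow> bool" where
  "efxw n w S A \<longleftrightarrow> (\<forall>i<n. A i \<subseteq> S) \<and> (\<Union>i<n. A i) = S \<and>
     (\<forall>i<n. \<forall>j<n. i \<noteq> j \<longrightarrow> A i \<inter> A j = {}) \<and>
     (\<forall>i<n. \<forall>j<n. \<forall>g\<in>A j. sum w (A j - {g}) \<le> sum w (A i))"

lemma exists_min_idx:
  fixes f :: "nat \<Rightarrow> real"
  assumes "n \<ge> 1"
  shows "\<exists>k<n. \<forall>i<n. f k \<le> f i"
proof -
  have fin: "finite (f ` {..<n})" by simp
  have ne: "f ` {..<n} \<noteq> {}" using assms by (simp add: lessThan_empty_iff)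
  have "Min (f ` {..<n}) \<in> f ` {..<n}" using Min_in[OF fin ne] .
  then obtain k where k: "k < n" "f k = Min (f ` {..<n})" by auto
  then show ?thesis using fin by (metis Min_le image_eqI lessThan_iff)
qed

lemma exists_min_elem:
  fixes w :: "'g \<Rightarrow> real"
  assumes "finite S" "S \<noteq> {}"
  shows "\<exists>g\<in>S. \<forall>h\<in>S. w g \<le> w h"
proof -
  have "Min (w ` S) \<in> w ` S" using assms by auto
  then obtain g where "g \<in> S" "w g = Min (w ` S)" by auto
  then show ?thesis using assms by (metis Min_le finite_imageI image_eqI)
qed

lemma efx_exists:
  fixes w :: "'g \<Rightarrow> real"
  assumes "n \<ge> 1" "finite S" "\<forall>g\<in>S. w g \<ge> 0"
  shows "\<exists>A. efxw n w S A"
  using assms(2,3)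
proof (induction "card S" arbitrary: S rule: less_induct)
  case less
  show ?case
  proof (cases "S = {}")
    case True
    then show ?thesis unfolding efxw_def by (rule_tac x="\<lambda>_. {}" in exI) auto
  next
    case False
    obtain g where g: "g \<in> S" "\<forall>h\<in>S. w g \<le> w h"
      using exists_min_elem[OF less.prems(1) False] by blast
    let ?S' = "S - {g}"
    have "card ?S' < card S" using g less.prems(1) by (meson card_Diff1_less)
    then obtain A where A: "efxw n w ?S' A"
      using less.hyps[of ?S'] less.prems by auto
    obtain k where k: "k < n" "\<forall>i<n. sum w (A k) \<le> sum w (A i)"
      using exists_min_idx[OF assms(1), of "\<lambda>i. sum w (A i)"] by blast
    define A' where "A' = A(k := insert g (A k))"
    have sub: "\<forall>i<n. A i \<subseteq> ?S'" and un: "(\<Union>i<n. A i) = ?S'"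
      and dj: "\<forall>i<n. \<forall>j<n. i \<noteq> j \<longrightarrow> A i \<inter> A j = {}"
      and ef: "\<forall>i<n. \<forall>j<n. \<forall>h\<in>A j. sum w (A j - {h}) \<le> sum w (A i)"
      using A unfolding efxw_def by auto
    have finA: "\<And>i. i < n \<Longrightarrow> finite (A i)" using sub less.prems(1)
      by (meson finite_Diff finite_subset)
    have gnot: "\<And>i. i < n \<Longrightarrow> g \<notin> A i" using sub by auto
    have sumk: "sum w (A' k) = sum w (A k) + w g"
      unfolding A'_def using finA[OF k(1)] gnot[OF k(1)] by simp
    have wg: "w g \<ge> 0" using g less.prems(2) by auto
    have "efxw n w S A'"
      unfolding efxw_def
    proof (intro conjI allI impI ballI)
      fix i assume "i < n" then show "A' i \<subseteq> S" using sub g unfolding A'_def by auto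
    next
      show "(\<Union>i<n. A' i) = S"
      proof
        show "(\<Union>i<n. A' i) \<subseteq> S" using sub g unfolding A'_def by auto
        show "S \<subseteq> (\<Union>i<n. A' i)"
        proof
          fix x assume x: "x \<in> S"
          show "x \<in> (\<Union>i<n. A' i)"
          proof (cases "x = g")
            case True then show ?thesis using k(1) unfolding A'_def by auto
          next
            case False
            then have "x \<in> (\<Union>i<n. A i)" using un x by auto
            then obtain i where "i < n" "x \<in> A i" by auto
            then show ?thesis unfolding A'_def by (cases "i = k") auto
          qed
        qed
      qed
    next
      fix i j assume "i < n" "j < n" "i \<noteq> j"
      then show "A' i \<inter> A' j = {}" using dj gnot unfolding A'_def by auto
    next
      fix i j h assume i: "i < n" and j: "j < n" and h: "h \<in> A' j"
      have lhsi: "sum w (A i) \<le> sum w (A' i)"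
      proof (cases "i = k")
        case True then show ?thesis using sumk wg by simp
      next
        case False then show ?thesis unfolding A'_def by simp
      qed
      show "sum w (A' j - {h}) \<le> sum w (A' i)"
      proof (cases "j = k")
        case False
        then have "h \<in> A j" "A' j = A j" using h unfolding A'_def by auto
        then show ?thesis using ef i j lhsi by fastforce
      next
        case True
        then have Aj: "A' j = insert g (A k)" unfolding A'_def by simp
        show ?thesis
        proof (cases "h = g")
          case True
          then have "A' j - {h} = A k" using Aj gnot[OF k(1)] by auto
          then show ?thesis using k(2) i lhsi by fastforce
        next
          case False
          then have hA: "h \<in> A k" using h Aj by auto
          have "A' j - {h} = insert g (A k - {h})" using Aj False by auto
          then have "sum w (A' j - {h}) = w g + sum w (A k - {h})"
            using finA[OF k(1)] gnot[OF k(1)] by simp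
          also have "\<dots> = w g + sum w (A k) - w h"
            using finA[OF k(1)] hA by (simp add: sum_diff1)
          also have "\<dots> \<le> sum w (A k)" using g hA sub k(1) by fastforce
          also have "\<dots> \<le> sum w (A i)" using k(2) i by simp
          finally show ?thesis using lhsi by simp
        qed
      qed
    qed
    then show ?thesis by blast
  qed
qed

lemma alloc_sum:
  assumes "is_allocation n M B" "finite M"
  shows "(\<Sum>i<n. sum w (B i)) = sum w M"
proof -
  have "sum w (\<Union>(B ` {..<n})) = (\<Sum>i<n. sum w (B i))"
    using assms unfolding is_allocation_def
    by (intro sum.UNION_disjoint) (auto intro: finite_subset)
  then show ?thesis using assms unfolding is_allocation_def by simp
qed

theorem theorem5p3:
  fixes n :: nat and M :: "'g set" and v :: "'g set \<Rightarrow> real"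
  assumes "n \<ge> 1" and "finite M"
    and "valuation M v" and "additive_valuation M v"
  shows "\<exists>A. is_allocation n M A \<and> EFX n (\<lambda>_. v) A \<and>
             pareto_optimal n M (\<lambda>_. v) A"
proof -
  define w where "w = (\<lambda>g. v {g})"
  have add: "\<And>S. S \<subseteq> M \<Longrightarrow> v S = sum w S"
    using assms(4) unfolding additive_valuation_def w_def by auto
  have "\<forall>g\<in>M. w g \<ge> 0" using assms(3) unfolding valuation_def w_def by auto
  then obtain A where A: "efxw n w M A" using efx_exists[OF assms(1,2)] by blast
  have alloc: "is_allocation n M A" using A unfolding efxw_def is_allocation_def by auto
  have sub: "\<forall>i<n. A i \<subseteq> M" using A unfolding efxw_def by auto
  have efx: "EFX n (\<lambda>_. v) A"
    unfolding EFX_def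
  proof (intro allI impI ballI)
    fix i j g assume "i < n" "j < n" "g \<in> A j"
    moreover have "A j - {g} \<subseteq> M" using sub \<open>j < n\<close> by auto
    ultimately show "v (A j - {g}) \<le> v (A i)"
      using A sub add[of "A i"] add[of "A j - {g}"] unfolding efxw_def by auto
  qed
  have po: "pareto_optimal n M (\<lambda>_. v) A"
    unfolding pareto_optimal_def
  proof
    assume "\<exists>B. is_allocation n M B \<and> (\<forall>i<n. v (A i) \<le> v (B i)) \<and> (\<exists>j<n. v (A j) < v (B j))"
    then obtain B where B: "is_allocation n M B" "\<forall>i<n. v (A i) \<le> v (B i)" "\<exists>j<n. v (A j) < v (B j)"
      by blast
    have subB: "\<forall>i<n. B i \<subseteq> M" using B(1) unfolding is_allocation_def by auto
    have "(\<Sum>i<n. sum w (A i)) < (\<Sum>i<n. sum w (B i))"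
      using B(2,3) sub subB add by (intro sum_strict_mono_ex1) auto
    then show False using alloc_sum[OF alloc assms(2), of w] alloc_sum[OF B(1) assms(2), of w] by simp
  qed
  show ?thesis using alloc efx po by blast
qed

end
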